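(* For every $\theta\in\mathbb{R}$, $\displaystyle\lim_{n\to\infty}\hat\theta_n=\theta$ holds $P$-almost surely.
   Context: Fix $m>1/2$. Let $c_m:=\left(\int_{\mathbb R}(1+x^2)^{-m}\,dx\right)^{-1}$ and $f(x):=c_m(1+x^2)^{-m}$. For $\theta\in\mathbb R$, $\mathrm{PVII}_m(\theta,1)$ denotes the Pearson Type VII distribution with location $\theta$ and scale $1$, i.e. the law with density $x\mapsto f(x-\theta)$ (for $m=1$ this is the Cauchy distribution). Let $(X_n)_{n\ge1}$ be i.i.d. random variables on a probability space $(\Omega,\mathcal F,P)$ with law $\mathrm{PVII}_m(\theta,1)$. For each $n$, let $\hat\theta_n(x_1,\dots,x_n)$ be any Borel measurable function on $\mathbb R^n$ such that $\hat\theta_n(x_1,\dots,x_n)$ is a maximizer of $t\mapsto\prod_{i=1}^n f(x_i-t)$ over $t\in\mathbb R$ (such a measurable function exists), and let $\hat\theta_n:=\hat\theta_n(X_1,\dots,X_n)$ be the maximum likelihood estimator of the location. *)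

theory Defs
  imports "HOL-Probability.Probability"
begin

definition pvii_c :: "real \<Rightarrow> real" where
  "pvii_c m = 1 / (\<integral>x. (1 + x\<^sup>2) powr (-m) \<partial>lborel)"

definition pvii_f :: "real \<Rightarrow> real \<Rightarrow> real" where
  "pvii_f m x = pvii_c m * (1 + x\<^sup>2) powr (-m)"

end

theory Submission
  imports Defs
begin

lemma slln_bounded:
  fixes M :: "'a measure" and X :: "nat \<Rightarrow> 'a \<Rightarrow> real" and h :: "real \<Rightarrow> real"
  assumes P: "prob_space M"
    and indep: "prob_space.indep_vars M (\<lambda>_. borel) X UNIV"
    and distr: "\<And>i. distr M borel (X i) = distr M borel (X 0)"
    and hm: "h \<in> borel_measurable borel"
    and hb: "\<And>x. h x \<in> {a..b}" and ab: "a < b" and \<delta>: "\<delta> > 0"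
  shows "AE \<omega> in M. eventually (\<lambda>n. \<bar>(\<Sum>i<n. h (X i \<omega>)) / n - (\<integral>\<omega>. h (X 0 \<omega>) \<partial>M)\<bar> < \<delta>) sequentially"
proof -
  interpret prob_space M by (rule P)
  have rv[measurable]: "X i \<in> borel_measurable M" for i
    using indep unfolding indep_vars_def by blast
  note hm[measurable]
  define \<mu> where "\<mu> = (\<integral>\<omega>. h (X 0 \<omega>) \<partial>M)"
  define B where "B n = {\<omega>\<in>space M. \<bar>(\<Sum>i\<in>{..<Suc n}. h (X i \<omega>)) / real (card {..<Suc n}) - \<mu>\<bar> \<ge> \<delta>}" for n
  define q where "q = exp (-2 * \<delta>\<^sup>2 / (b - a)\<^sup>2)"
  have q: "q < 1" "0 \<le> q" using \<delta> ab unfolding q_def by auto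
  have Bp: "measure M (B n) \<le> 2 * q ^ Suc n" for n
  proof -
    interpret H: Hoeffding_ineq_iid M "{..<Suc n}" "\<lambda>i \<omega>. h (X i \<omega>)" "\<lambda>\<omega>. h (X 0 \<omega>)" a b \<mu>
    proof unfold_locales
      show "indep_vars (\<lambda>_. borel) (\<lambda>i \<omega>. h (X i \<omega>)) {..<Suc n}"
      proof -
        have "indep_vars (\<lambda>_. borel) X {..<Suc n}" by (rule indep_vars_subset[OF indep]) simp
        then show ?thesis by (rule indep_vars_compose2[where Y="\<lambda>_. h" and N="\<lambda>_. borel"]) (rule hm)
      qed
      show "distr M borel (\<lambda>\<omega>. h (X i \<omega>)) = distr M borel (\<lambda>\<omega>. h (X 0 \<omega>))" for i
      proof -
        have "distr M borel (\<lambda>\<omega>. h (X i \<omega>)) = distr (distr M borel (X i)) borel h"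
          using distr_distr[of h borel borel "X i" M] by (simp add: comp_def)
        also have "\<dots> = distr (distr M borel (X 0)) borel h" by (simp only: distr[of i])
        also have "\<dots> = distr M borel (\<lambda>\<omega>. h (X 0 \<omega>))"
          using distr_distr[of h borel borel "X 0" M] by (simp add: comp_def)
        finally show ?thesis .
      qed
    qed (use hb in \<open>auto simp: \<mu>_def\<close>)
    have "measure M (B n) \<le> 2 * exp (-2 * real (card {..<Suc n}) * \<delta>\<^sup>2 / (b - a)\<^sup>2)"
      unfolding B_def using H.Hoeffding_ineq_abs_ge'[of \<delta>] \<delta> ab by auto
    also have "exp (-2 * real (card {..<Suc n}) * \<delta>\<^sup>2 / (b - a)\<^sup>2) = q ^ Suc n"
    proof -
      have "-2 * real (card {..<Suc n}) * \<delta>\<^sup>2 / (b - a)\<^sup>2 = real (Suc n) * (-2 * \<delta>\<^sup>2 / (b - a)\<^sup>2)"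
        using ab by (simp add: field_simps)
      then show ?thesis unfolding q_def by (simp only: exp_of_nat_mult)
    qed
    finally show ?thesis .
  qed
  have "summable (\<lambda>n. measure M (B n))"
  proof (rule summable_comparison_test)
    show "\<exists>N. \<forall>n\<ge>N. norm (measure M (B n)) \<le> 2 * q ^ Suc n" using Bp by auto
    show "summable (\<lambda>n. 2 * q ^ Suc n)"
      using q by (intro summable_mult summable_Suc_iff[THEN iffD2] summable_geometric) auto
  qed
  moreover have "B n \<in> sets M" for n unfolding B_def by measurable
  ultimately have "AE \<omega> in M. eventually (\<lambda>n. \<omega> \<in> space M - B n) sequentially"
    by (intro borel_cantelli_AE1) (auto simp: emeasure_eq_measure)
  then show ?thesis
  proof (rule eventually_mono)
    fix \<omega> assume "eventually (\<lambda>n. \<omega> \<in> space M - B n) sequentially"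
    then have "eventually (\<lambda>n. \<bar>(\<Sum>i<Suc n. h (X i \<omega>)) / real (Suc n) - \<mu>\<bar> < \<delta>) sequentially"
      by (rule eventually_mono) (auto simp: B_def)
    then show "eventually (\<lambda>n. \<bar>(\<Sum>i<n. h (X i \<omega>)) / n - (\<integral>\<omega>. h (X 0 \<omega>) \<partial>M)\<bar> < \<delta>) sequentially"
      unfolding \<mu>_def by (subst eventually_sequentially_Suc[symmetric])
  qed
qed

definition gg :: "real \<Rightarrow> real \<Rightarrow> real" where
  "gg s y = ln (1 + (y - s)\<^sup>2) - ln (1 + y\<^sup>2)"

lemma sq_shift_bound: "1 + (y - s)\<^sup>2 \<le> 2 * (1 + s\<^sup>2) * (1 + y\<^sup>2)" for y s :: real
proof -
  have "(y - s)\<^sup>2 \<le> 2 * y\<^sup>2 + 2 * s\<^sup>2"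
    using sum_squares_ge_zero[of "y + s" 0] by (simp add: power2_eq_square algebra_simps)
  moreover have "0 \<le> s\<^sup>2 * y\<^sup>2" by simp
  ultimately show ?thesis by (simp add: algebra_simps power2_eq_square)
qed

lemma gg_bound: "\<bar>gg s y\<bar> \<le> ln (2 * (1 + s\<^sup>2))"
proof -
  have p1: "0 < 1 + (y - s)\<^sup>2" "0 < 1 + y\<^sup>2" "0 < 2 * (1 + s\<^sup>2)"
    by (auto intro: add_pos_nonneg)
  have a: "1 + (y - s)\<^sup>2 \<le> 2 * (1 + s\<^sup>2) * (1 + y\<^sup>2)" by (rule sq_shift_bound)
  have b: "1 + y\<^sup>2 \<le> 2 * (1 + s\<^sup>2) * (1 + (y - s)\<^sup>2)"
    using sq_shift_bound[of "y - s" "-s"] by simp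
  have "ln (1 + (y - s)\<^sup>2) \<le> ln (2 * (1 + s\<^sup>2) * (1 + y\<^sup>2))"
    using a p1 by simp
  also have "\<dots> = ln (2 * (1 + s\<^sup>2)) + ln (1 + y\<^sup>2)" using p1 by (simp add: ln_mult_pos)
  finally have 1: "ln (1 + (y - s)\<^sup>2) \<le> ln (2 * (1 + s\<^sup>2)) + ln (1 + y\<^sup>2)" .
  have "ln (1 + y\<^sup>2) \<le> ln (2 * (1 + s\<^sup>2) * (1 + (y - s)\<^sup>2))"
    using b p1 by simp
  also have "\<dots> = ln (2 * (1 + s\<^sup>2)) + ln (1 + (y - s)\<^sup>2)" using p1 by (simp add: ln_mult_pos)
  finally have 2: "ln (1 + y\<^sup>2) \<le> ln (2 * (1 + s\<^sup>2)) + ln (1 + (y - s)\<^sup>2)" .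
  show ?thesis using 1 2 unfolding gg_def by linarith
qed

lemma ln1sq_lipschitz: "\<bar>ln (1 + a\<^sup>2) - ln (1 + b\<^sup>2)\<bar> \<le> \<bar>a - b\<bar>" for a b :: real
proof -
  have main: "\<bar>ln (1 + v\<^sup>2) - ln (1 + u\<^sup>2)\<bar> \<le> v - u" if uv: "u < v" for u v :: real
  proof -
    have D: "((\<lambda>x. ln (1 + x\<^sup>2)) has_real_derivative (2 * x / (1 + x\<^sup>2))) (at x)" for x :: real
    proof -
      have "0 < 1 + x\<^sup>2" by (simp add: add_pos_nonneg)
      then show ?thesis
        by (auto intro!: derivative_eq_intros simp: power2_eq_square)
    qed
    have "\<exists>z>u. z < v \<and> ln (1 + v\<^sup>2) - ln (1 + u\<^sup>2) = (v - u) * (2 * z / (1 + z\<^sup>2))"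
      by (rule MVT2[OF uv]) (rule D)
    then obtain z where z: "u < z" "z < v" "ln (1 + v\<^sup>2) - ln (1 + u\<^sup>2) = (v - u) * (2 * z / (1 + z\<^sup>2))"
      by blast
    have pz: "0 < 1 + z\<^sup>2" by (simp add: add_pos_nonneg)
    have "2 * \<bar>z\<bar> \<le> 1 + z\<^sup>2" using sum_squares_ge_zero[of "\<bar>z\<bar> - 1" 0]
      by (simp add: power2_eq_square algebra_simps)
    then have "\<bar>2 * z / (1 + z\<^sup>2)\<bar> \<le> 1" using pz by (simp add: abs_mult divide_le_eq_1)
    then have "\<bar>(v - u) * (2 * z / (1 + z\<^sup>2))\<bar> \<le> (v - u) * 1"
      using uv by (simp add: abs_mult mult_left_mono del: times_divide_eq_right)
    then show ?thesis using z by simp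
  qed
  consider "a < b" | "a = b" | "b < a" by linarith
  then show ?thesis
  proof cases
    case 1 then show ?thesis using main[of a b] by (simp add: abs_minus_commute)
  next
    case 3 then show ?thesis using main[of b a] by simp
  qed simp
qed

lemma gg_lipschitz: "\<bar>gg s y - gg t y\<bar> \<le> \<bar>s - t\<bar>"
  using ln1sq_lipschitz[of "y - s" "y - t"] unfolding gg_def by (simp add: abs_minus_commute)

lemma gg_near: assumes "\<bar>y\<bar> \<le> A" "A \<le> \<bar>s\<bar>"
  shows "ln ((1 + (\<bar>s\<bar> - A)\<^sup>2) / (1 + A\<^sup>2)) \<le> gg s y"
proof -
  have "\<bar>s\<bar> - A \<le> \<bar>y - s\<bar>" using assms by linarith
  then have "(\<bar>s\<bar> - A)\<^sup>2 \<le> (y - s)\<^sup>2" using assms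
    by (metis abs_ge_zero diff_ge_0_iff_ge power2_abs power_mono)
  then have 1: "ln (1 + (\<bar>s\<bar> - A)\<^sup>2) \<le> ln (1 + (y - s)\<^sup>2)"
    by (simp add: add_pos_nonneg)
  have "y\<^sup>2 \<le> A\<^sup>2" using assms
    by (metis abs_ge_zero power2_abs power_mono)
  then have 2: "ln (1 + y\<^sup>2) \<le> ln (1 + A\<^sup>2)"
    by (simp add: add_pos_nonneg)
  have "ln ((1 + (\<bar>s\<bar> - A)\<^sup>2) / (1 + A\<^sup>2)) = ln (1 + (\<bar>s\<bar> - A)\<^sup>2) - ln (1 + A\<^sup>2)"
    by (rule ln_divide_pos) (auto intro: add_pos_nonneg)
  then show ?thesis using 1 2 unfolding gg_def by linarith
qed

lemma large_s:
  fixes y :: "nat \<Rightarrow> real"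
  assumes n: "n > 0" and A: "A \<ge> 0" and s: "\<bar>s\<bar> \<ge> 4 * (1 + A\<^sup>2)"
    and G: "4 * real (card {i\<in>{..<n}. \<bar>y i\<bar> \<le> A}) \<ge> 3 * real n"
  shows "(\<Sum>i<n. gg s (y i)) > 0"
proof -
  define u where "u = \<bar>s\<bar>"
  define L1 where "L1 = ln ((1 + (u - A)\<^sup>2) / (1 + A\<^sup>2))"
  define L2 where "L2 = ln (2 * (1 + s\<^sup>2))"
  define G where "G = {i\<in>{..<n}. \<bar>y i\<bar> \<le> A}"
  define R where "R = {..<n} - G"
  have pA: "0 < 1 + A\<^sup>2" by (simp add: add_pos_nonneg)
  have AA: "A \<le> 1 + A\<^sup>2" using sum_squares_ge_zero[of "A - 1" 0] A
    by (simp add: power2_eq_square algebra_simps)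
  have u4: "u \<ge> 4" using s unfolding u_def using pA by (smt (verit) zero_le_power2)
  have "4 * A \<le> u" using s AA unfolding u_def by (smt (verit))
  then have uA: "A \<le> u / 4" by simp
  have "u / 2 \<le> u - A" using uA u4 by linarith
  then have "(u / 2)\<^sup>2 \<le> (u - A)\<^sup>2" using u4 by (intro power_mono) auto
  then have "u\<^sup>2 / 4 \<le> 1 + (u - A)\<^sup>2" by (simp add: power_divide)
  then have "u\<^sup>2 / 4 / (1 + A\<^sup>2) \<le> (1 + (u - A)\<^sup>2) / (1 + A\<^sup>2)"
    using pA by (intro divide_right_mono) auto
  then have x1: "u\<^sup>2 / (4 * (1 + A\<^sup>2)) \<le> (1 + (u - A)\<^sup>2) / (1 + A\<^sup>2)"
    by (simp add: divide_divide_eq_left)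
  have su: "4 * (1 + A\<^sup>2) \<le> u" using s unfolding u_def .
  have "u * (4 * (1 + A\<^sup>2)) \<le> u * u" by (rule mult_left_mono[OF su]) (use u4 in auto)
  then have "u \<le> u\<^sup>2 / (4 * (1 + A\<^sup>2))"
    using pA by (simp add: field_simps power2_eq_square)
  with x1 have xu: "u \<le> (1 + (u - A)\<^sup>2) / (1 + A\<^sup>2)" by linarith
  define x where "x = (1 + (u - A)\<^sup>2) / (1 + A\<^sup>2)"
  have xu': "u \<le> x" using xu x_def by simp
  have x0: "0 < x" using xu' u4 by linarith
  have "u ^ 3 \<le> x ^ 3" using xu' u4 by (intro power_mono) auto
  moreover have "2 * (1 + u\<^sup>2) < u ^ 3"
  proof -
    have "4 * u\<^sup>2 \<le> u * u\<^sup>2" using u4 by (intro mult_right_mono) auto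
    moreover have "2 * (1 + u\<^sup>2) < 4 * u\<^sup>2"
    proof -
      have "4\<^sup>2 \<le> u\<^sup>2" using u4 by (intro power_mono) auto
      then show ?thesis by simp
    qed
    ultimately show ?thesis by (simp add: power3_eq_cube power2_eq_square)
  qed
  ultimately have "2 * (1 + s\<^sup>2) < x ^ 3" unfolding u_def by simp
  then have L: "L2 < 3 * L1"
    unfolding L2_def L1_def x_def[symmetric]
  proof -
    have p: "0 < 2 * (1 + s\<^sup>2)" by (simp add: add_pos_nonneg)
    have "ln (2 * (1 + s\<^sup>2)) < ln (x ^ 3)" using p x0 \<open>2 * (1 + s\<^sup>2) < x ^ 3\<close> by simp
    also have "\<dots> = 3 * ln x" using x0 by (simp add: ln_realpow)
    finally show "ln (2 * (1 + s\<^sup>2)) < 3 * ln x" .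
  qed
  have L10: "0 \<le> L1" unfolding L1_def x_def[symmetric] using xu' u4 by simp
  have L20: "0 \<le> L2" unfolding L2_def by (simp add: add_pos_nonneg)
  have fin: "finite G" "finite R" unfolding G_def R_def by auto
  have split: "(\<Sum>i<n. gg s (y i)) = (\<Sum>i\<in>R. gg s (y i)) + (\<Sum>i\<in>G. gg s (y i))"
    unfolding R_def by (rule sum.subset_diff) (auto simp: G_def)
  have s1: "(\<Sum>i\<in>G. gg s (y i)) \<ge> real (card G) * L1"
  proof -
    have "(\<Sum>i\<in>G. L1) \<le> (\<Sum>i\<in>G. gg s (y i))"
      by (intro sum_mono) (use uA u4 in \<open>auto simp: G_def L1_def u_def intro!: gg_near\<close>)
    then show ?thesis by simp
  qed
  have s2: "(\<Sum>i\<in>R. gg s (y i)) \<ge> - (real (card R) * L2)"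
  proof -
    have "(\<Sum>i\<in>R. - L2) \<le> (\<Sum>i\<in>R. gg s (y i))"
    proof (intro sum_mono)
      fix i show "- L2 \<le> gg s (y i)" using gg_bound[of s "y i"] unfolding L2_def by linarith
    qed
    then show ?thesis by simp
  qed
  have cR: "real (card R) = real n - real (card G)"
  proof -
    have "G \<subseteq> {..<n}" unfolding G_def by auto
    then have "card G \<le> n" using card_mono[of "{..<n}" G] by simp
    moreover have "card R = n - card G" unfolding R_def using \<open>G \<subseteq> {..<n}\<close> fin
      by (subst card_Diff_subset) auto
    ultimately show ?thesis by (simp add: of_nat_diff)
  qed
  have "real (card G) * L1 \<ge> (3 / 4 * real n) * L1"
    using G L10 unfolding G_def by (intro mult_right_mono) auto
  moreover have "real (card R) * L2 \<le> (1 / 4 * real n) * L2"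
    using G L20 cR unfolding G_def by (intro mult_right_mono) auto
  moreover have "(3 / 4 * real n) * L1 - (1 / 4 * real n) * L2 > 0"
  proof -
    have "(3 / 4 * real n) * L1 - (1 / 4 * real n) * L2 = real n / 4 * (3 * L1 - L2)" by (simp add: algebra_simps)
    also have "\<dots> > 0" using n L by simp
    finally show ?thesis .
  qed
  ultimately show ?thesis using split s1 s2 by linarith
qed

lemma prod_compare:
  fixes y :: "nat \<Rightarrow> real"
  assumes c: "pvii_c m > 0" and m: "m > 0" and S: "(\<Sum>i<n. gg s (y i)) > 0"
  shows "(\<Prod>i<n. pvii_f m (y i - s)) < (\<Prod>i<n. pvii_f m (y i))"
proof -
  define c where "c = pvii_c m"
  have f: "pvii_f m x = c * exp (- m * ln (1 + x\<^sup>2))" for x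
    unfolding pvii_f_def c_def powr_def by (simp add: add_pos_nonneg) (smt (verit) zero_le_power2)
  have "(\<Prod>i<n. pvii_f m (y i - s)) = c ^ n * exp (\<Sum>i<n. - m * ln (1 + (y i - s)\<^sup>2))"
    by (simp add: f prod.distrib exp_sum)
  also have "\<dots> < c ^ n * exp (\<Sum>i<n. - m * ln (1 + (y i)\<^sup>2))"
  proof -
    have "(\<Sum>i<n. gg s (y i)) = (\<Sum>i<n. ln (1 + (y i - s)\<^sup>2)) - (\<Sum>i<n. ln (1 + (y i)\<^sup>2))"
      unfolding gg_def by (simp add: sum_subtractf)
    then have "m * (\<Sum>i<n. ln (1 + (y i)\<^sup>2)) < m * (\<Sum>i<n. ln (1 + (y i - s)\<^sup>2))"
      using S m by simp
    then have "(\<Sum>i<n. - m * ln (1 + (y i - s)\<^sup>2)) < (\<Sum>i<n. - m * ln (1 + (y i)\<^sup>2))"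
      by (simp add: sum_distrib_left[symmetric] sum_negf)
    then show ?thesis using c unfolding c_def by simp
  qed
  also have "\<dots> = (\<Prod>i<n. pvii_f m (y i))"
    by (simp add: f prod.distrib exp_sum)
  finally show ?thesis .
qed

lemma one_sq_ne0[simp]: "1 + x\<^sup>2 \<noteq> (0::real)"
  by (smt (verit) zero_le_power2)

lemma f_eq: "pvii_f m y = pvii_c m * exp (- m * ln (1 + y\<^sup>2))"
  unfolding pvii_f_def powr_def by (simp add: add_pos_nonneg)

lemma f_meas[measurable]: "pvii_f m \<in> borel_measurable borel"
  unfolding f_eq[abs_def] by measurable

lemma gg_meas[measurable]: "gg s \<in> borel_measurable borel"
  unfolding gg_def[abs_def] by measurable

lemma f_cont: "continuous_on UNIV (pvii_f m)"
  unfolding f_eq[abs_def] by (intro continuous_intros) (auto simp: add_pos_nonneg)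

lemma gg_cont: "continuous_on UNIV (gg s)"
  unfolding gg_def[abs_def] by (intro continuous_intros) (auto simp: add_pos_nonneg)

lemma exp_strict: "a > 0 \<Longrightarrow> 1 - a < exp (- a)" for a :: real
proof -
  assume a: "a > 0"
  show ?thesis
  proof (cases "a \<le> 2")
    case True
    have "1 - a / 2 \<le> exp (- (a / 2))" using exp_ge_add_one_self[of "- (a/2)"] by simp
    then have "(1 - a / 2)\<^sup>2 \<le> (exp (- (a / 2)))\<^sup>2" using True by (intro power_mono) auto
    also have "(exp (- (a / 2)))\<^sup>2 = exp (- a)" by (simp add: power2_eq_square flip: exp_add)
    finally have "(1 - a / 2)\<^sup>2 \<le> exp (- a)" .
    moreover have "1 - a < (1 - a / 2)\<^sup>2" using a by (simp add: power2_eq_square algebra_simps)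
    ultimately show ?thesis by linarith
  next
    case False
    then show ?thesis using exp_gt_zero[of "-a"] by linarith
  qed
qed

lemma shift_integral: "(\<integral>y. F (y - s) \<partial>lborel) = (\<integral>y. F y \<partial>lborel)" for F :: "real \<Rightarrow> real"
  using lborel_integral_real_affine[of 1 F "-s"] by simp

lemma shift_integrable: "integrable lborel F \<Longrightarrow> integrable lborel (\<lambda>y. F (y - s))" for F :: "real \<Rightarrow> real"
  using lborel_integrable_real_affine[of F 1 "-s"] by simp

lemma density_facts:
  fixes M :: "'a measure" and Z :: "'a \<Rightarrow> real"
  assumes P: "prob_space M" and D: "distributed M lborel Z (\<lambda>x. ennreal (pvii_f m (x - \<theta>)))"
  shows "pvii_c m > 0" "integrable lborel (pvii_f m)" "(\<integral>y. pvii_f m y \<partial>lborel) = 1"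
proof -
  have c0: "pvii_c m \<ge> 0" unfolding pvii_c_def
    by (intro divide_nonneg_nonneg integral_nonneg_AE) auto
  then have fnn: "pvii_f m y \<ge> 0" for y unfolding pvii_f_def by simp
  have Zm: "Z \<in> measurable M lborel" using D by (simp add: distributed_def)
  have eq: "distr M lborel Z = density lborel (\<lambda>x. ennreal (pvii_f m (x - \<theta>)))"
    using D by (simp add: distributed_def)
  interpret Q: prob_space "distr M lborel Z" using P Zm by (intro prob_space.prob_space_distr) auto
  have "emeasure (density lborel (\<lambda>x. ennreal (pvii_f m (x - \<theta>)))) UNIV = 1"
    using Q.emeasure_space_1 unfolding eq by simp
  then have nn: "(\<integral>\<^sup>+x. ennreal (pvii_f m (x - \<theta>)) \<partial>lborel) = 1"
    by (subst (asm) emeasure_density) auto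
  have int1: "integrable lborel (\<lambda>x. pvii_f m (x - \<theta>))"
    by (rule integrableI_nonneg) (auto simp: fnn nn)
  have i1: "(\<integral>x. pvii_f m (x - \<theta>) \<partial>lborel) = 1"
    by (subst integral_eq_nn_integral) (auto simp: fnn nn)
  show "integrable lborel (pvii_f m)"
    using shift_integrable[OF int1, of "-\<theta>"] by simp
  show "(\<integral>y. pvii_f m y \<partial>lborel) = 1"
    using i1 shift_integral[of "pvii_f m" \<theta>] by simp
  show "pvii_c m > 0"
  proof (rule ccontr)
    assume "\<not> pvii_c m > 0"
    then have "pvii_c m = 0" using c0 by simp
    then have "(\<integral>\<^sup>+x. ennreal (pvii_f m (x - \<theta>)) \<partial>lborel) = 0" by (simp add: pvii_f_def)
    with nn show False by simp
  qed
qed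

lemma expect_link:
  fixes M :: "'a measure" and Z :: "'a \<Rightarrow> real"
  assumes D: "distributed M lborel Z (\<lambda>x. ennreal (pvii_f m (x - \<theta>)))" and c: "pvii_c m > 0"
    and h[measurable]: "h \<in> borel_measurable borel"
  shows "(\<integral>\<omega>. h (Z \<omega> - \<theta>) \<partial>M) = (\<integral>y. pvii_f m y * h y \<partial>lborel)"
proof -
  have fnn: "pvii_f m y \<ge> 0" for y unfolding pvii_f_def using c by simp
  have "(\<integral>x. pvii_f m (x - \<theta>) * h (x - \<theta>) \<partial>lborel) = (\<integral>\<omega>. h (Z \<omega> - \<theta>) \<partial>M)"
    by (rule distributed_integral[OF D]) (auto simp: fnn)
  moreover have "(\<integral>x. pvii_f m (x - \<theta>) * h (x - \<theta>) \<partial>lborel) = (\<integral>y. pvii_f m y * h y \<partial>lborel)"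
    using shift_integral[of "\<lambda>y. pvii_f m y * h y" \<theta>] by simp
  ultimately show ?thesis by simp
qed

lemma integrable_fg:
  assumes "integrable lborel (pvii_f m)" "pvii_c m > 0"
  shows "integrable lborel (\<lambda>y. pvii_f m y * gg s y)"
proof (rule Bochner_Integration.integrable_bound[where f="\<lambda>y. pvii_f m y * ln (2 * (1 + s\<^sup>2))"])
  show "integrable lborel (\<lambda>y. pvii_f m y * ln (2 * (1 + s\<^sup>2)))" using assms(1) by simp
  show "AE y in lborel. norm (pvii_f m y * gg s y) \<le> norm (pvii_f m y * ln (2 * (1 + s\<^sup>2)))"
  proof (intro AE_I2)
    fix y
    have "pvii_f m y \<ge> 0" unfolding pvii_f_def using assms(2) by simp
    moreover have "0 \<le> ln (2 * (1 + s\<^sup>2))" by (simp add: add_pos_nonneg)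
    ultimately show "norm (pvii_f m y * gg s y) \<le> norm (pvii_f m y * ln (2 * (1 + s\<^sup>2)))"
      using gg_bound[of s y] by (simp add: abs_mult mult_left_mono)
  qed
qed simp

lemma mu_lipschitz:
  assumes I: "integrable lborel (pvii_f m)" "(\<integral>y. pvii_f m y \<partial>lborel) = 1" and c: "pvii_c m > 0"
  shows "\<bar>(\<integral>y. pvii_f m y * gg s y \<partial>lborel) - (\<integral>y. pvii_f m y * gg t y \<partial>lborel)\<bar> \<le> \<bar>s - t\<bar>"
proof -
  have fnn: "pvii_f m y \<ge> 0" for y unfolding pvii_f_def using c by simp
  have "(\<integral>y. pvii_f m y * gg s y \<partial>lborel) - (\<integral>y. pvii_f m y * gg t y \<partial>lborel)
      = (\<integral>y. pvii_f m y * gg s y - pvii_f m y * gg t y \<partial>lborel)"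
    using integrable_fg[OF I(1) c] by (simp add: integral_diff)
  also have "\<bar>\<dots>\<bar> \<le> (\<integral>y. pvii_f m y * \<bar>s - t\<bar> \<partial>lborel)"
  proof (rule integral_abs_bound_integral)
    show "integrable lborel (\<lambda>y. pvii_f m y * gg s y - pvii_f m y * gg t y)"
      using integrable_fg[OF I(1) c] by simp
    show "integrable lborel (\<lambda>y. pvii_f m y * \<bar>s - t\<bar>)" using I(1) by simp
    fix y
    show "\<bar>pvii_f m y * gg s y - pvii_f m y * gg t y\<bar> \<le> pvii_f m y * \<bar>s - t\<bar>"
      using gg_lipschitz[of s y t] fnn[of y]
      by (simp add: right_diff_distrib[symmetric] abs_mult mult_left_mono)
  qed
  also have "\<dots> = \<bar>s - t\<bar>" using I by simp
  finally show ?thesis .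
qed

lemma integral_pos_cont:
  fixes q :: "real \<Rightarrow> real"
  assumes cont: "continuous_on UNIV q" and nn: "\<And>y. q y \<ge> 0" and q0: "q 0 > 0"
    and int: "integrable lborel q"
  shows "(\<integral>y. q y \<partial>lborel) > 0"
proof -
  have "continuous (at 0) q" using cont by (simp add: continuous_on_eq_continuous_at)
  then obtain d where d: "d > 0" "\<And>y. dist y 0 < d \<Longrightarrow> dist (q y) (q 0) < q 0 / 2"
    unfolding continuous_at_eps_delta using q0 by (meson half_gt_zero)
  have le: "q 0 / 2 * indicator {- (d/2) .. d/2} y \<le> q y" for y
  proof (cases "y \<in> {- (d/2) .. d/2}")
    case True
    then have "dist y 0 < d" using d by (auto simp: dist_real_def)
    then have "\<bar>q y - q 0\<bar> < q 0 / 2" using d(2) by (simp add: dist_real_def)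
    then have "q 0 / 2 \<le> q y" using abs_less_iff[of "q y - q 0" "q 0 / 2"] by linarith
    then show ?thesis using True by simp
  next
    case False then show ?thesis using nn[of y] by simp
  qed
  have "(\<integral>y. q 0 / 2 * indicator {- (d/2) .. d/2} y \<partial>lborel) \<le> (\<integral>y. q y \<partial>lborel)"
  proof (rule integral_mono[OF _ int])
    show "integrable lborel (\<lambda>y. q 0 / 2 * indicator {- (d/2) .. d/2} y)"
      by (intro integrable_mult_right integrable_real_indicator) (auto simp: emeasure_lborel_Icc_eq)
  qed (rule le)
  moreover have "(\<integral>y. q 0 / 2 * indicator {- (d/2) .. d/2} y \<partial>lborel) = q 0 / 2 * d"
    using d by simp
  moreover have "q 0 / 2 * d > 0" using q0 d by simp
  ultimately show ?thesis by linarith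
qed

lemma kl_pos:
  assumes I: "integrable lborel (pvii_f m)" "(\<integral>y. pvii_f m y \<partial>lborel) = 1"
    and c: "pvii_c m > 0" and m: "m > 0" and s: "s \<noteq> 0"
  shows "(\<integral>y. pvii_f m y * gg s y \<partial>lborel) > 0"
proof -
  define F where "F = pvii_f m"
  define q where "q y = F y * (exp (- (m * gg s y)) - 1 + m * gg s y)" for y
  have Fnn: "F y \<ge> 0" for y unfolding F_def pvii_f_def using c by simp
  have Fshift: "F y * exp (- (m * gg s y)) = F (y - s)" for y
    unfolding F_def f_eq gg_def by (simp add: algebra_simps flip: exp_add)
  have qeq: "q y = F (y - s) - F y + m * (F y * gg s y)" for y
    unfolding q_def by (simp add: algebra_simps Fshift[symmetric])
  have intF: "integrable lborel F" using I unfolding F_def by simp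
  have intFs: "integrable lborel (\<lambda>y. F (y - s))" by (rule shift_integrable[OF intF])
  have intFg: "integrable lborel (\<lambda>y. F y * gg s y)" using integrable_fg[OF I(1) c] unfolding F_def .
  have intq: "integrable lborel q" unfolding qeq[abs_def] using intF intFs intFg by simp
  have "(\<integral>y. q y \<partial>lborel) = (\<integral>y. F (y - s) \<partial>lborel) - (\<integral>y. F y \<partial>lborel) + m * (\<integral>y. F y * gg s y \<partial>lborel)"
    unfolding qeq[abs_def] using intF intFs intFg by simp
  also have "\<dots> = m * (\<integral>y. F y * gg s y \<partial>lborel)" using shift_integral[of F s] by simp
  finally have qi: "(\<integral>y. q y \<partial>lborel) = m * (\<integral>y. F y * gg s y \<partial>lborel)" .
  have "(\<integral>y. q y \<partial>lborel) > 0"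
  proof (rule integral_pos_cont[OF _ _ _ intq])
    show "continuous_on UNIV q" unfolding q_def[abs_def] F_def
      using f_cont gg_cont by (intro continuous_intros) auto
    show "q y \<ge> 0" for y unfolding q_def
      using Fnn[of y] exp_ge_add_one_self[of "- (m * gg s y)"] by simp
    have "F 0 = pvii_c m" unfolding F_def f_eq by simp
    moreover have "gg s 0 = ln (1 + s\<^sup>2)" unfolding gg_def by simp
    moreover have "ln (1 + s\<^sup>2) > 0"
    proof -
      have "s\<^sup>2 > 0" using s by simp
      then show ?thesis by (intro ln_gt_zero) simp
    qed
    ultimately show "q 0 > 0" unfolding q_def
      using exp_strict[of "m * ln (1 + s\<^sup>2)"] c m by simp
  qed
  then show ?thesis using qi m unfolding F_def by (simp add: zero_less_mult_iff)
qed

lemma tail_A: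
  assumes I: "integrable lborel (pvii_f m)" "(\<integral>y. pvii_f m y \<partial>lborel) = 1" and c: "pvii_c m > 0"
  shows "\<exists>A\<ge>0. (\<integral>y. pvii_f m y * indicator {-A..A} y \<partial>lborel) > 7/8"
proof -
  have fnn: "pvii_f m y \<ge> 0" for y unfolding pvii_f_def using c by simp
  have "(\<lambda>k::nat. (\<integral>y. pvii_f m y * indicator {-real k..real k} y \<partial>lborel)) \<longlonglongrightarrow> (\<integral>y. pvii_f m y \<partial>lborel)"
  proof (rule integral_dominated_convergence[where w="pvii_f m"])
    show "AE y in lborel. (\<lambda>k::nat. pvii_f m y * indicator {-real k..real k} y) \<longlonglongrightarrow> pvii_f m y"
    proof (intro AE_I2)
      fix y :: real
      obtain N :: nat where "\<bar>y\<bar> \<le> real N" using real_arch_simple by blast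
      then have "eventually (\<lambda>k::nat. pvii_f m y * indicator {-real k..real k} y = pvii_f m y) sequentially"
        unfolding eventually_sequentially
        by (intro exI[of _ N]) (auto simp: indicator_def)
      then show "(\<lambda>k::nat. pvii_f m y * indicator {-real k..real k} y) \<longlonglongrightarrow> pvii_f m y"
        by (subst tendsto_cong) auto
    qed
    show "AE y in lborel. norm (pvii_f m y * indicator {-real k..real k} y) \<le> pvii_f m y" for k
      using fnn by (intro AE_I2) (auto simp: indicator_def)
  qed (use I in auto)
  then have "eventually (\<lambda>k::nat. (\<integral>y. pvii_f m y * indicator {-real k..real k} y \<partial>lborel) > 7/8) sequentially"
    using I(2) by (intro order_tendstoD) auto
  then obtain k :: nat where "(\<integral>y. pvii_f m y * indicator {-real k..real k} y \<partial>lborel) > 7/8"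
    using eventually_sequentially by auto
  then show ?thesis by (intro exI[of _ "real k"]) auto
qed

lemma grid:
  fixes h S s :: real
  assumes h: "h > 0" and s: "-S \<le> s" "s \<le> S"
  shows "\<exists>k\<in>{0..nat \<lceil>2 * S / h\<rceil>}. \<bar>s - (-S + h * real k)\<bar> \<le> h"
proof -
  define k where "k = nat \<lfloor>(s + S) / h\<rfloor>"
  have q0: "(s + S) / h \<ge> 0" using s h by simp
  then have kr: "real k = of_int \<lfloor>(s + S) / h\<rfloor>" unfolding k_def by simp
  have f1: "of_int \<lfloor>(s + S) / h\<rfloor> \<le> (s + S) / h" by (rule of_int_floor_le)
  have f2: "(s + S) / h < of_int \<lfloor>(s + S) / h\<rfloor> + 1" by (rule real_of_int_floor_add_one_gt)
  have "h * real k \<le> h * ((s + S) / h)" using f1 h unfolding kr by (intro mult_left_mono) auto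
  then have a: "h * real k \<le> s + S" using h by simp
  have "h * ((s + S) / h) < h * (real k + 1)" using f2 h unfolding kr by (intro mult_strict_left_mono) auto
  moreover have "h * ((s + S) / h) = s + S" using h by simp
  ultimately have b: "s + S < h * real k + h" by (simp add: algebra_simps)
  have "k \<le> nat \<lceil>2 * S / h\<rceil>"
  proof -
    have "(s + S) / h \<le> 2 * S / h" using s h by (intro divide_right_mono) auto
    then have "\<lfloor>(s + S) / h\<rfloor> \<le> \<lceil>2 * S / h\<rceil>"
      by (meson floor_le_ceiling le_floor_iff order_trans floor_mono ceiling_mono)
    then show ?thesis unfolding k_def by (simp add: nat_mono)
  qed
  moreover have "\<bar>s - (-S + h * real k)\<bar> \<le> h" using a b by linarith
  ultimately show ?thesis by auto
qed

lemma sum_gg_lip: "\<bar>(\<Sum>i<n. gg s (y i)) - (\<Sum>i<n. gg t (y i))\<bar> \<le> real n * \<bar>s - t\<bar>"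
proof -
  have "\<bar>(\<Sum>i<n. gg s (y i)) - (\<Sum>i<n. gg t (y i))\<bar> = \<bar>\<Sum>i<n. gg s (y i) - gg t (y i)\<bar>"
    by (simp add: sum_subtractf)
  also have "\<dots> \<le> (\<Sum>i<n. \<bar>gg s (y i) - gg t (y i)\<bar>)" by (rule sum_abs)
  also have "\<dots> \<le> (\<Sum>i<n. \<bar>s - t\<bar>)" by (intro sum_mono gg_lipschitz)
  finally show ?thesis by simp
qed

lemma middle_det:
  fixes y :: "nat \<Rightarrow> real" and \<mu> :: "real \<Rightarrow> real"
  assumes n: "n > 0" and \<kappa>: "\<kappa> > 0"
    and t: "t \<in> T" "\<bar>s - t\<bar> \<le> \<kappa> / 4"
    and muK: "\<mu> s \<ge> \<kappa>" and mulip: "\<bar>\<mu> s - \<mu> t\<bar> \<le> \<bar>s - t\<bar>"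
    and avg: "\<forall>t\<in>T. \<bar>(\<Sum>i<n. gg t (y i)) / n - \<mu> t\<bar> < \<kappa> / 4"
  shows "(\<Sum>i<n. gg s (y i)) > 0"
proof -
  have n': "real n > 0" using n by simp
  have "\<bar>(\<Sum>i<n. gg t (y i)) / n - \<mu> t\<bar> < \<kappa> / 4" using avg t by auto
  moreover have "\<bar>(\<Sum>i<n. gg s (y i)) / n - (\<Sum>i<n. gg t (y i)) / n\<bar> \<le> \<bar>s - t\<bar>"
  proof -
    have "\<bar>(\<Sum>i<n. gg s (y i)) / n - (\<Sum>i<n. gg t (y i)) / n\<bar>
        = \<bar>(\<Sum>i<n. gg s (y i)) - (\<Sum>i<n. gg t (y i))\<bar> / n"
      using n' by (simp add: diff_divide_distrib[symmetric])
    also have "\<dots> \<le> real n * \<bar>s - t\<bar> / n" using n' sum_gg_lip[where n=n and s=s and y=y and t=t]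
      by (intro divide_right_mono) auto
    finally show ?thesis using n' by simp
  qed
  ultimately have "(\<Sum>i<n. gg s (y i)) / n > 0" using t muK mulip \<kappa> by linarith
  then show ?thesis using n' by (simp add: zero_less_divide_iff)
qed

lemma card_as_sum:
  fixes y :: "nat \<Rightarrow> real"
  shows "(\<Sum>i<n. indicator {-A..A} (y i)) = real (card {i\<in>{..<n}. \<bar>y i\<bar> \<le> A})"
proof -
  have "real (card {i\<in>{..<n}. \<bar>y i\<bar> \<le> A}) = (\<Sum>i\<in>{i\<in>{..<n}. \<bar>y i\<bar> \<le> A}. 1)" by simp
  also have "\<dots> = (\<Sum>i<n. if \<bar>y i\<bar> \<le> A then 1 else 0)" by (rule sum.inter_filter) simp
  also have "\<dots> = (\<Sum>i<n. indicator {-A..A} (y i))"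
    by (intro sum.cong) (auto simp: indicator_def abs_le_iff)
  finally show ?thesis by simp
qed

theorem theorem1p1:
  fixes m \<theta> :: real
    and M :: "'a measure"
    and X :: "nat \<Rightarrow> 'a \<Rightarrow> real"
    and est :: "nat \<Rightarrow> (nat \<Rightarrow> real) \<Rightarrow> real"
  assumes m: "m > 1/2"
    and P: "prob_space M"
    and indep: "prob_space.indep_vars M (\<lambda>_. borel) X UNIV"
    and distr: "\<And>i. distributed M lborel (X i) (\<lambda>x. ennreal (pvii_f m (x - \<theta>)))"
    and est_meas: "\<And>n. est n \<in> borel_measurable (Pi\<^sub>M {..<n} (\<lambda>_. borel))"
    and est_max: "\<And>n x t. x \<in> space (Pi\<^sub>M {..<n} (\<lambda>_. (borel :: real measure))) \<Longrightarrow>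
        (\<Prod>i<n. pvii_f m (x i - t)) \<le> (\<Prod>i<n. pvii_f m (x i - est n x))"
  shows "AE \<omega> in M. (\<lambda>n. est n (restrict (\<lambda>i. X i \<omega>) {..<n})) \<longlonglongrightarrow> \<theta>"
proof -
  interpret prob_space M by (rule P)
  have m0: "m > 0" using m by simp
  have Xm[measurable]: "X i \<in> borel_measurable M" for i
    using indep unfolding indep_vars_def by blast
  have c: "pvii_c m > 0" and intF: "integrable lborel (pvii_f m)"
    and int1: "(\<integral>y. pvii_f m y \<partial>lborel) = 1"
    using density_facts[OF P distr[of 0]] by auto
  have deq: "distr M borel (X i) = distr M borel (X 0)" for i
  proof -
    have "distr M lborel (X i) = distr M lborel (X 0)"
      using distr[of i] distr[of 0] by (simp add: distributed_def)
    moreover have "distr M borel (X j) = distr M lborel (X j)" for j unfolding distr_def by simp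
    ultimately show ?thesis by simp
  qed
  have SL: "AE \<omega> in M. eventually (\<lambda>n. \<bar>(\<Sum>i<n. h (X i \<omega> - \<theta>)) / n - (\<integral>y. pvii_f m y * h y \<partial>lborel)\<bar> < \<delta>) sequentially"
    if hm: "h \<in> borel_measurable borel" and hb: "\<And>x. h x \<in> {a..b}" and ab: "a < b" and \<delta>: "\<delta> > 0"
    for h :: "real \<Rightarrow> real" and a b \<delta> :: real
  proof -
    note hm[measurable]
    have hm': "(\<lambda>x. h (x - \<theta>)) \<in> borel_measurable borel" by measurable
    have "AE \<omega> in M. eventually (\<lambda>n. \<bar>(\<Sum>i<n. (\<lambda>x. h (x - \<theta>)) (X i \<omega>)) / n - (\<integral>\<omega>. (\<lambda>x. h (x - \<theta>)) (X 0 \<omega>) \<partial>M)\<bar> < \<delta>) sequentially"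
      by (rule slln_bounded[OF P indep deq hm' _ ab \<delta>]) (use hb in auto)
    moreover have "(\<integral>\<omega>. h (X 0 \<omega> - \<theta>) \<partial>M) = (\<integral>y. pvii_f m y * h y \<partial>lborel)"
      by (rule expect_link[OF distr[of 0] c hm])
    ultimately show ?thesis by simp
  qed
  have key: "AE \<omega> in M. eventually (\<lambda>n. \<forall>s. \<epsilon> \<le> \<bar>s\<bar> \<longrightarrow> 0 < (\<Sum>i<n. gg s (X i \<omega> - \<theta>))) sequentially"
    if \<epsilon>: "\<epsilon> > 0" for \<epsilon> :: real
  proof -
    obtain A where A: "A \<ge> 0" "(\<integral>y. pvii_f m y * indicator {-A..A} y \<partial>lborel) > 7/8"
      using tail_A[OF intF int1 c] by auto
    define pA where "pA = (\<integral>y. pvii_f m y * indicator {-A..A} y \<partial>lborel)"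
    define S where "S = 4 * (1 + A\<^sup>2)"
    have large: "AE \<omega> in M. eventually (\<lambda>n. \<bar>(\<Sum>i<n. indicator {-A..A} (X i \<omega> - \<theta>)) / n - pA\<bar> < 1/8) sequentially"
      unfolding pA_def by (rule SL[OF _ _ zero_less_one]) (auto simp: indicator_def)
    have mid: "AE \<omega> in M. eventually (\<lambda>n. \<forall>s. \<epsilon> \<le> \<bar>s\<bar> \<and> \<bar>s\<bar> \<le> S \<longrightarrow> 0 < (\<Sum>i<n. gg s (X i \<omega> - \<theta>))) sequentially"
    proof (cases "\<epsilon> \<le> S")
      case False then show ?thesis by auto
    next
      case True
      define \<mu> where "\<mu> s = (\<integral>y. pvii_f m y * gg s y \<partial>lborel)" for s
      define K where "K = {-S..-\<epsilon>} \<union> {\<epsilon>..S}"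
      have Kc: "compact K" unfolding K_def by (intro compact_Un compact_Icc)
      have Kne: "K \<noteq> {}" using True unfolding K_def by auto
      have mulip: "\<bar>\<mu> s - \<mu> t\<bar> \<le> \<bar>s - t\<bar>" for s t unfolding \<mu>_def by (rule mu_lipschitz[OF intF int1 c])
      have "1-lipschitz_on K \<mu>"
        by (rule lipschitz_onI) (use mulip in \<open>auto simp: dist_real_def\<close>)
      then have "continuous_on K \<mu>" by (rule lipschitz_on_continuous_on)
      then have "\<exists>x\<in>K. \<forall>y\<in>K. \<mu> x \<le> \<mu> y" by (rule continuous_attains_inf[OF Kc Kne])
      then obtain s0 where s0: "s0 \<in> K" "\<And>s. s \<in> K \<Longrightarrow> \<mu> s0 \<le> \<mu> s" by blast
      define \<kappa> where "\<kappa> = \<mu> s0"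
      have "s0 \<noteq> 0" using s0(1) \<epsilon> unfolding K_def by auto
      then have \<kappa>: "\<kappa> > 0" unfolding \<kappa>_def \<mu>_def by (rule kl_pos[OF intF int1 c m0])
      define N where "N = nat \<lceil>2 * S / (\<kappa> / 4)\<rceil>"
      define T where "T = (\<lambda>k. -S + (\<kappa> / 4) * real k) ` {0..N}"
      have Tf: "finite T" unfolding T_def by simp
      have "AE \<omega> in M. \<forall>t\<in>T. eventually (\<lambda>n. \<bar>(\<Sum>i<n. gg t (X i \<omega> - \<theta>)) / n - \<mu> t\<bar> < \<kappa> / 4) sequentially"
      proof (rule AE_finite_allI[OF Tf])
        fix t :: real
        have "1 < 2 * (1 + t\<^sup>2)" by (simp add: distrib_left add_pos_nonneg)
        then have lpos: "0 < ln (2 * (1 + t\<^sup>2))" by (intro ln_gt_zero)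
        then have lt: "- ln (2 * (1 + t\<^sup>2)) < ln (2 * (1 + t\<^sup>2))" by simp
        show "AE \<omega> in M. eventually (\<lambda>n. \<bar>(\<Sum>i<n. gg t (X i \<omega> - \<theta>)) / n - \<mu> t\<bar> < \<kappa> / 4) sequentially"
          unfolding \<mu>_def
        proof (rule SL[OF gg_meas _ lt])
          fix y show "gg t y \<in> {- ln (2 * (1 + t\<^sup>2))..ln (2 * (1 + t\<^sup>2))}"
            using gg_bound[of t y] abs_le_iff[of "gg t y" "ln (2 * (1 + t\<^sup>2))"] by auto
        qed (use \<kappa> in simp)
      qed
      then show ?thesis
      proof (rule eventually_mono)
        fix \<omega> assume "\<forall>t\<in>T. eventually (\<lambda>n. \<bar>(\<Sum>i<n. gg t (X i \<omega> - \<theta>)) / n - \<mu> t\<bar> < \<kappa> / 4) sequentially"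
        then have ev: "eventually (\<lambda>n. \<forall>t\<in>T. \<bar>(\<Sum>i<n. gg t (X i \<omega> - \<theta>)) / n - \<mu> t\<bar> < \<kappa> / 4) sequentially"
          by (rule eventually_ball_finite[OF Tf])
        have ev0: "eventually (\<lambda>n::nat. n > 0) sequentially" by (rule eventually_gt_at_top)
        from ev ev0 show "eventually (\<lambda>n. \<forall>s. \<epsilon> \<le> \<bar>s\<bar> \<and> \<bar>s\<bar> \<le> S \<longrightarrow> 0 < (\<Sum>i<n. gg s (X i \<omega> - \<theta>))) sequentially"
        proof (rule eventually_elim2)
          fix n :: nat
          assume avg: "\<forall>t\<in>T. \<bar>(\<Sum>i<n. gg t (X i \<omega> - \<theta>)) / n - \<mu> t\<bar> < \<kappa> / 4" and n: "n > 0"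
          show "\<forall>s. \<epsilon> \<le> \<bar>s\<bar> \<and> \<bar>s\<bar> \<le> S \<longrightarrow> 0 < (\<Sum>i<n. gg s (X i \<omega> - \<theta>))"
          proof (intro allI impI)
            fix s assume sb: "\<epsilon> \<le> \<bar>s\<bar> \<and> \<bar>s\<bar> \<le> S"
            then have sK: "s \<in> K" unfolding K_def by auto
            have "\<kappa> / 4 > 0" using \<kappa> by simp
            moreover have "-S \<le> s" "s \<le> S" using sb by auto
            ultimately have "\<exists>k\<in>{0..N}. \<bar>s - (-S + \<kappa> / 4 * real k)\<bar> \<le> \<kappa> / 4"
              unfolding N_def by (rule grid)
            then obtain k where k: "k \<in> {0..N}" "\<bar>s - (-S + \<kappa> / 4 * real k)\<bar> \<le> \<kappa> / 4"
              by blast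
            have tT: "-S + \<kappa> / 4 * real k \<in> T" unfolding T_def using k(1) by auto
            show "0 < (\<Sum>i<n. gg s (X i \<omega> - \<theta>))"
              by (rule middle_det[OF n \<kappa> tT k(2) _ mulip avg]) (use s0(2)[OF sK] in \<open>simp add: \<kappa>_def\<close>)
          qed
        qed
      qed
    qed
    have "AE \<omega> in M. eventually (\<lambda>n. \<bar>(\<Sum>i<n. indicator {-A..A} (X i \<omega> - \<theta>)) / n - pA\<bar> < 1/8) sequentially
         \<and> eventually (\<lambda>n. \<forall>s. \<epsilon> \<le> \<bar>s\<bar> \<and> \<bar>s\<bar> \<le> S \<longrightarrow> 0 < (\<Sum>i<n. gg s (X i \<omega> - \<theta>))) sequentially"
      using large mid by (rule eventually_conj)
    then show ?thesis
    proof (rule eventually_mono)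
      fix \<omega>
      assume H: "eventually (\<lambda>n. \<bar>(\<Sum>i<n. indicator {-A..A} (X i \<omega> - \<theta>)) / n - pA\<bar> < 1/8) sequentially
         \<and> eventually (\<lambda>n. \<forall>s. \<epsilon> \<le> \<bar>s\<bar> \<and> \<bar>s\<bar> \<le> S \<longrightarrow> 0 < (\<Sum>i<n. gg s (X i \<omega> - \<theta>))) sequentially"
      have ev0: "eventually (\<lambda>n::nat. n > 0) sequentially" by (rule eventually_gt_at_top)
      have "eventually (\<lambda>n. (\<bar>(\<Sum>i<n. indicator {-A..A} (X i \<omega> - \<theta>)) / n - pA\<bar> < 1/8
          \<and> (\<forall>s. \<epsilon> \<le> \<bar>s\<bar> \<and> \<bar>s\<bar> \<le> S \<longrightarrow> 0 < (\<Sum>i<n. gg s (X i \<omega> - \<theta>)))) \<and> n > 0) sequentially"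
        using H ev0 by (intro eventually_conj) auto
      then show "eventually (\<lambda>n. \<forall>s. \<epsilon> \<le> \<bar>s\<bar> \<longrightarrow> 0 < (\<Sum>i<n. gg s (X i \<omega> - \<theta>))) sequentially"
      proof (rule eventually_mono)
        fix n :: nat
        assume Hn: "(\<bar>(\<Sum>i<n. indicator {-A..A} (X i \<omega> - \<theta>)) / n - pA\<bar> < 1/8
          \<and> (\<forall>s. \<epsilon> \<le> \<bar>s\<bar> \<and> \<bar>s\<bar> \<le> S \<longrightarrow> 0 < (\<Sum>i<n. gg s (X i \<omega> - \<theta>)))) \<and> n > 0"
        show "\<forall>s. \<epsilon> \<le> \<bar>s\<bar> \<longrightarrow> 0 < (\<Sum>i<n. gg s (X i \<omega> - \<theta>))"
        proof (intro allI impI)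
          fix s assume es: "\<epsilon> \<le> \<bar>s\<bar>"
          show "0 < (\<Sum>i<n. gg s (X i \<omega> - \<theta>))"
          proof (cases "\<bar>s\<bar> \<le> S")
            case True then show ?thesis using Hn es by blast
          next
            case False
            have n: "n > 0" using Hn by blast
            define C where "C = real (card {i\<in>{..<n}. \<bar>X i \<omega> - \<theta>\<bar> \<le> A})"
            have "\<bar>C / n - pA\<bar> < 1/8" using Hn card_as_sum[of A "\<lambda>i. X i \<omega> - \<theta>" n]
              unfolding C_def by simp
            then have "C / n > 3/4" using A(2) unfolding pA_def by linarith
            then have "4 * C \<ge> 3 * real n" using n by (simp add: field_simps)
            then show ?thesis using False
              by (intro large_s[OF n A(1)]) (auto simp: C_def S_def)
          qed
        qed
      qed
    qed
  qed
  have "AE \<omega> in M. \<forall>k::nat. eventually (\<lambda>n. \<bar>est n (restrict (\<lambda>i. X i \<omega>) {..<n}) - \<theta>\<bar> < 1 / real (Suc k)) sequentially"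
    unfolding AE_all_countable
  proof
    fix k :: nat
    have e: "1 / real (Suc k) > 0" by simp
    show "AE \<omega> in M. eventually (\<lambda>n. \<bar>est n (restrict (\<lambda>i. X i \<omega>) {..<n}) - \<theta>\<bar> < 1 / real (Suc k)) sequentially"
      using key[OF e]
    proof (rule eventually_mono)
      fix \<omega>
      assume "eventually (\<lambda>n. \<forall>s. 1 / real (Suc k) \<le> \<bar>s\<bar> \<longrightarrow> 0 < (\<Sum>i<n. gg s (X i \<omega> - \<theta>))) sequentially"
      then show "eventually (\<lambda>n. \<bar>est n (restrict (\<lambda>i. X i \<omega>) {..<n}) - \<theta>\<bar> < 1 / real (Suc k)) sequentially"
      proof (rule eventually_mono)
        fix n
        assume H: "\<forall>s. 1 / real (Suc k) \<le> \<bar>s\<bar> \<longrightarrow> 0 < (\<Sum>i<n. gg s (X i \<omega> - \<theta>))"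
        define x where "x = restrict (\<lambda>i. X i \<omega>) {..<n}"
        define e where "e = est n x"
        have xs: "x \<in> space (Pi\<^sub>M {..<n} (\<lambda>_. (borel :: real measure)))"
          unfolding x_def by (simp add: space_PiM)
        have le: "(\<Prod>i<n. pvii_f m (x i - \<theta>)) \<le> (\<Prod>i<n. pvii_f m (x i - e))"
          unfolding e_def by (rule est_max[OF xs])
        have "\<bar>e - \<theta>\<bar> < 1 / real (Suc k)"
        proof (rule ccontr)
          assume "\<not> \<bar>e - \<theta>\<bar> < 1 / real (Suc k)"
          then have "1 / real (Suc k) \<le> \<bar>e - \<theta>\<bar>" by simp
          then have "0 < (\<Sum>i<n. gg (e - \<theta>) (X i \<omega> - \<theta>))" using H by blast
          then have "(\<Prod>i<n. pvii_f m ((X i \<omega> - \<theta>) - (e - \<theta>))) < (\<Prod>i<n. pvii_f m (X i \<omega> - \<theta>))"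
            by (rule prod_compare[OF c m0])
          moreover have "(\<Prod>i<n. pvii_f m (x i - \<theta>)) = (\<Prod>i<n. pvii_f m (X i \<omega> - \<theta>))"
            unfolding x_def by (intro prod.cong) auto
          moreover have "(\<Prod>i<n. pvii_f m (x i - e)) = (\<Prod>i<n. pvii_f m ((X i \<omega> - \<theta>) - (e - \<theta>)))"
            unfolding x_def by (intro prod.cong) auto
          ultimately show False using le by linarith
        qed
        then show "\<bar>est n (restrict (\<lambda>i. X i \<omega>) {..<n}) - \<theta>\<bar> < 1 / real (Suc k)"
          unfolding e_def x_def .
      qed
    qed
  qed
  then show ?thesis
  proof (rule eventually_mono)
    fix \<omega>
    assume H: "\<forall>k::nat. eventually (\<lambda>n. \<bar>est n (restrict (\<lambda>i. X i \<omega>) {..<n}) - \<theta>\<bar> < 1 / real (Suc k)) sequentially"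
    show "(\<lambda>n. est n (restrict (\<lambda>i. X i \<omega>) {..<n})) \<longlonglongrightarrow> \<theta>"
      unfolding tendsto_iff dist_real_def
    proof (intro allI impI)
      fix r :: real assume r: "r > 0"
      then obtain k where k: "inverse (real (Suc k)) < r" using reals_Archimedean by blast
      show "eventually (\<lambda>n. \<bar>est n (restrict (\<lambda>i. X i \<omega>) {..<n}) - \<theta>\<bar> < r) sequentially"
        using H[rule_format, of k] by (rule eventually_mono) (use k in \<open>simp add: inverse_eq_divide\<close>)
    qed
  qed
qed

end
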